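(* Let $\mathbb{K}$ be an algebraically closed field, and let $f(x), g(x) \in \mathbb{K}[x]$ be monic polynomials, with $d = \deg f \geq 1$. Assume $f$ is squarefree, and let $\mathcal{Z}(f)$ and $\mathcal{Z}(g)$ denote the sets of roots of $f$ and $g$. Define \[ s(x) = \prod_{\zeta \in \mathcal{Z}(f) \setminus (\mathcal{Z}(f) \cap \mathcal{Z}(g))} (x - \zeta). \] Let $M_g$ be the $d \times d$ matrix, in the monomial basis $1, x, \ldots, x^{d-1}$ of $\mathbb{A} = \mathbb{K}[x]/(f)$, of the map $h \mapsto \pi(gh)$, where $\pi(p)$ is the remainder of $p$ modulo $f$. Suppose $\ker(M_g) \neq 0$. Let $K_g$ be a matrix whose columns form a basis of $\ker(M_g)$, and consider a column echelon form of $K_g$. Then the first column of this column echelon form is, up to multiplication by a nonzero scalar, the coefficient vector of $s(x)$ in the basis $1, x, \ldots, x^{d-1}$.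
   Context: A vector $(c_0, \ldots, c_{d-1})^T \in \mathbb{K}^d$ is identified with the polynomial $c_0 + c_1 x + \cdots + c_{d-1} x^{d-1}$. A column echelon form of $K_g$ is a matrix obtained from $K_g$ by elementary column operations, in which the columns are nonzero and the polynomials associated to the columns have strictly increasing degrees from the first column to the last. In particular, the first column has the smallest degree. *)

theory Defs
  imports "HOL-Computational_Algebra.Computational_Algebra"
begin

text \<open>Vectors (c_0,...,c_{d-1}) in K^d are identified with polynomials of degree < d
  (the zero polynomial included). Under this identification the matrix M_g of
  h |-> pi(g h) in the monomial basis acts as h |-> (g * h) mod f.\<close>

definition vecs :: "nat \<Rightarrow> 'a::field poly set" where
  "vecs d = {h. degree h < d}"

definition mult_map :: "'a::field poly \<Rightarrow> 'a poly \<Rightarrow> 'a poly \<Rightarrow> 'a poly" where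
  "mult_map f g h = (g * h) mod f"

definition ker_M :: "'a::field poly \<Rightarrow> 'a poly \<Rightarrow> 'a poly set" where
  "ker_M f g = {h \<in> vecs (degree f). mult_map f g h = 0}"

text \<open>A matrix is represented as the list of its columns.\<close>
definition lin_comb :: "('a::field) list \<Rightarrow> 'a poly list \<Rightarrow> 'a poly" where
  "lin_comb cs xs = (\<Sum>i<length xs. smult (cs ! i) (xs ! i))"

definition col_span :: "'a::field poly list \<Rightarrow> 'a poly set" where
  "col_span xs = {lin_comb cs xs | cs. length cs = length xs}"

definition lin_indep :: "'a::field poly list \<Rightarrow> bool" where
  "lin_indep xs = (\<forall>cs. length cs = length xs \<longrightarrow> lin_comb cs xs = 0 \<longrightarrow> (\<forall>c\<in>set cs. c = 0))"

definition is_basis_cols :: "'a::field poly list \<Rightarrow> 'a poly set \<Rightarrow> bool" where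
  "is_basis_cols xs V = (lin_indep xs \<and> col_span xs = V)"

inductive elem_col_op :: "'a::field poly list \<Rightarrow> 'a poly list \<Rightarrow> bool" where
  swap: "i < length xs \<Longrightarrow> j < length xs \<Longrightarrow>
           elem_col_op xs (xs[i := xs ! j, j := xs ! i])"
| scale: "i < length xs \<Longrightarrow> c \<noteq> 0 \<Longrightarrow>
           elem_col_op xs (xs[i := smult c (xs ! i)])"
| add: "i < length xs \<Longrightarrow> j < length xs \<Longrightarrow> i \<noteq> j \<Longrightarrow>
           elem_col_op xs (xs[i := xs ! i + smult c (xs ! j)])"

definition col_echelon_form_of :: "'a::field poly list \<Rightarrow> 'a poly list \<Rightarrow> bool" where
  "col_echelon_form_of E K \<longleftrightarrow>
     elem_col_op\<^sup>*\<^sup>* K E \<and> (\<forall>e\<in>set E. e \<noteq> 0) \<and> sorted_wrt (<) (map degree E)"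

end

theory Submission imports Defs begin

lemma col_span_alt: "col_span xs = range (\<lambda>c. \<Sum>i<length xs. smult (c i) (xs!i))"
proof (intro set_eqI iffI)
  fix x assume "x \<in> col_span xs"
  then obtain cs where "length cs = length xs" "x = lin_comb cs xs" by (auto simp: col_span_def)
  then show "x \<in> range (\<lambda>c. \<Sum>i<length xs. smult (c i) (xs!i))"
    by (auto simp: lin_comb_def)
next
  fix x assume "x \<in> range (\<lambda>c. \<Sum>i<length xs. smult (c i) (xs!i))"
  then obtain c where x: "x = (\<Sum>i<length xs. smult (c i) (xs!i))" by auto
  have "x = lin_comb (map c [0..<length xs]) xs"
    unfolding x lin_comb_def by (intro sum.cong) auto
  then show "x \<in> col_span xs" unfolding col_span_def by force
qed

lemma cs_0: "0 \<in> col_span xs"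
  unfolding col_span_alt by (rule range_eqI[of _ _ "\<lambda>_. 0"]) simp

lemma cs_add: "x \<in> col_span xs \<Longrightarrow> y \<in> col_span xs \<Longrightarrow> x + y \<in> col_span xs"
proof -
  assume "x \<in> col_span xs" "y \<in> col_span xs"
  then obtain c d where "x = (\<Sum>i<length xs. smult (c i) (xs!i))" "y = (\<Sum>i<length xs. smult (d i) (xs!i))"
    unfolding col_span_alt by auto
  then have "x + y = (\<Sum>i<length xs. smult (c i + d i) (xs!i))" by (simp add: sum.distrib smult_add_left)
  then show ?thesis unfolding col_span_alt
    using rangeI[of "\<lambda>c. \<Sum>i<length xs. smult (c i) (xs!i)" "\<lambda>i. c i + d i"] by simp
qed

lemma cs_smult: "x \<in> col_span xs \<Longrightarrow> smult a x \<in> col_span xs"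
proof -
  have sm: "smult a (sum h A) = sum (\<lambda>i. smult a (h i)) A" for h :: "nat \<Rightarrow> 'a poly" and A
    by (induction A rule: infinite_finite_induct) (auto simp: smult_add_right)
  assume "x \<in> col_span xs"
  then obtain c where "x = (\<Sum>i<length xs. smult (c i) (xs!i))"
    unfolding col_span_alt by auto
  then have "smult a x = (\<Sum>i<length xs. smult (a * c i) (xs!i))" by (simp add: sm)
  then show ?thesis unfolding col_span_alt
    using rangeI[of "\<lambda>c. \<Sum>i<length xs. smult (c i) (xs!i)" "\<lambda>i. a * c i"] by simp
qed

lemma cs_nth: "k < length xs \<Longrightarrow> xs ! k \<in> col_span xs"
  unfolding col_span_alt
  by (rule range_eqI[of _ _ "\<lambda>i. if i = k then 1 else 0"]) (simp add: if_distrib[of "\<lambda>a. smult a _"] cong: if_cong)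

lemma cs_set: "set xs \<subseteq> col_span xs"
  by (auto simp: in_set_conv_nth intro: cs_nth)

lemma cs_sumc: "finite A \<Longrightarrow> (\<And>i. i \<in> A \<Longrightarrow> f i \<in> col_span xs) \<Longrightarrow> sum f A \<in> col_span xs"
  by (induction A rule: finite_induct) (auto intro: cs_0 cs_add)

lemma cs_sub: "set ys \<subseteq> col_span xs \<Longrightarrow> col_span ys \<subseteq> col_span xs"
  unfolding col_span_alt[of ys]
  by (auto intro!: cs_sumc cs_smult)

lemma elem_col_op_span: "elem_col_op xs ys \<Longrightarrow> col_span ys = col_span xs"
proof (induction rule: elem_col_op.induct)
  case (swap i xs j)
  let ?ys = "xs[i := xs ! j, j := xs ! i]"
  have "set ?ys \<subseteq> set xs" using swap by (auto simp: in_set_conv_nth nth_list_update)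
  moreover have "set xs \<subseteq> set ?ys" using swap
    by (auto simp: in_set_conv_nth nth_list_update)
  ultimately show ?case using cs_set cs_sub by (metis equalityI subset_trans)
next
  case (scale i xs c)
  let ?ys = "xs[i := smult c (xs ! i)]"
  have "set ?ys \<subseteq> col_span xs"
    using scale by (auto simp: in_set_conv_nth nth_list_update intro!: cs_nth cs_smult)
  moreover have "xs ! k \<in> col_span ?ys" if "k < length xs" for k
  proof (cases "k = i")
    case True
    have "smult (inverse c) (?ys ! i) \<in> col_span ?ys" using scale by (intro cs_smult cs_nth) auto
    then show ?thesis using True scale by simp
  next
    case False then show ?thesis using that cs_nth[of k ?ys] by simp
  qed
  then have "set xs \<subseteq> col_span ?ys" by (auto simp: in_set_conv_nth)
  ultimately show ?case using cs_sub by blast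
next
  case (add i xs j c)
  let ?ys = "xs[i := xs ! i + smult c (xs ! j)]"
  have "set ?ys \<subseteq> col_span xs"
    using add by (auto simp: in_set_conv_nth nth_list_update intro!: cs_nth cs_smult cs_add)
  moreover have "xs ! k \<in> col_span ?ys" if "k < length xs" for k
  proof (cases "k = i")
    case True
    have "?ys ! i + smult (-c) (?ys ! j) \<in> col_span ?ys" using add by (intro cs_add cs_smult cs_nth) auto
    then show ?thesis using True add by simp
  next
    case False then show ?thesis using that cs_nth[of k ?ys] by simp
  qed
  then have "set xs \<subseteq> col_span ?ys" by (auto simp: in_set_conv_nth)
  ultimately show ?case using cs_sub by blast
qed

lemma ops_span: "elem_col_op\<^sup>*\<^sup>* xs ys \<Longrightarrow> col_span ys = col_span xs"
  by (induction rule: rtranclp_induct) (auto dest: elem_col_op_span)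

lemma deg_comb:
  fixes E :: "'a::field poly list"
  assumes "sorted_wrt (<) (map degree E)" "E \<noteq> []"
    "(\<Sum>i<length E. smult (c i) (E!i)) \<noteq> 0"
  shows "degree (hd E) \<le> degree (\<Sum>i<length E. smult (c i) (E!i))"
  using assms
proof (induction E arbitrary: c)
  case Nil then show ?case by simp
next
  case (Cons e E')
  define r where "r = (\<Sum>i<length E'. smult (c (Suc i)) (E'!i))"
  have eq: "(\<Sum>i<length (e#E'). smult (c i) ((e#E')!i)) = smult (c 0) e + r"
    unfolding r_def by (simp only: length_Cons sum.lessThan_Suc_shift nth_Cons_0 nth_Cons_Suc)
  show ?case
  proof (cases "r = 0")
    case True
    then show ?thesis using Cons.prems eq by auto
  next
    case False
    then have ne: "E' \<noteq> []" unfolding r_def by auto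
    have "degree (hd E') \<le> degree r"
      using Cons.IH[of "\<lambda>i. c (Suc i)"] Cons.prems False ne unfolding r_def by auto
    moreover have "degree e < degree (hd E')" using Cons.prems(1) ne by (cases E') auto
    ultimately have "degree (smult (c 0) e) < degree r"
      using degree_smult_le[of "c 0" e] by linarith
    then have "degree (smult (c 0) e + r) = degree r" by (rule degree_add_eq_right)
    then show ?thesis using eq \<open>degree e < degree (hd E')\<close> \<open>degree (hd E') \<le> degree r\<close> by simp
  qed
qed

lemma prod_roots_dvd:
  fixes p :: "'a::field poly"
  assumes "finite S" "\<And>z. z \<in> S \<Longrightarrow> poly p z = 0"
  shows "(\<Prod>z\<in>S. [:-z, 1:]) dvd p"
  using assms
proof (induction S rule: finite_induct)
  case empty then show ?case by simp
next
  case (insert a S)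
  then have "(\<Prod>z\<in>S. [:-z, 1:]) dvd p" by auto
  then obtain q where q: "p = (\<Prod>z\<in>S. [:-z, 1:]) * q" by (auto elim: dvdE)
  have "poly (\<Prod>z\<in>S. [:-z, 1:]) a \<noteq> 0"
    using insert.hyps by (auto simp: poly_prod)
  moreover have "poly p a = 0" using insert.prems by auto
  ultimately have "poly q a = 0" using q by simp
  then have "[:-a, 1:] dvd q" by (simp add: poly_eq_0_iff_dvd)
  then have "[:-a, 1:] * (\<Prod>z\<in>S. [:-z, 1:]) dvd p" using q
    by (metis mult.commute mult_dvd_mono dvd_refl)
  then show ?case using insert.hyps by simp
qed

lemma col_span_Nil: "col_span [] = {0}"
  unfolding col_span_alt by auto

theorem mainTheorem4:
  fixes f g :: "'a::alg_closed_field poly"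
    and K E :: "'a poly list"
  assumes "lead_coeff f = 1" and "lead_coeff g = 1" and "degree f \<ge> 1"
    and "squarefree f"
    and "ker_M f g \<noteq> {0}"
    and "is_basis_cols K (ker_M f g)"
    and "col_echelon_form_of E K"
  shows "\<exists>c. c \<noteq> 0 \<and> hd E =
           smult c (\<Prod>\<zeta>\<in>{x. poly f x = 0} - ({x. poly f x = 0} \<inter> {x. poly g x = 0}). [:- \<zeta>, 1:])"
proof -
  define Z where "Z = {x. poly f x = 0}"
  define A where "A = Z - (Z \<inter> {x. poly g x = 0})"
  define B where "B = Z \<inter> {x. poly g x = 0}"
  define s where "s = (\<Prod>\<zeta>\<in>A. [:- \<zeta>, 1:])"
  define t where "t = (\<Prod>\<zeta>\<in>B. [:- \<zeta>, 1:])"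
  define P where "P = (\<Prod>\<zeta>\<in>Z. [:- \<zeta>, 1:])"
  have f0: "f \<noteq> 0" using assms(1) by auto
  have finZ: "finite Z" unfolding Z_def using poly_roots_finite[OF f0] .
  have "P dvd f" unfolding P_def using finZ by (intro prod_roots_dvd) (auto simp: Z_def)
  then obtain q where q: "f = P * q" by (auto elim: dvdE)
  have q0: "q \<noteq> 0" using q f0 by auto
  have lP: "lead_coeff P = 1" unfolding P_def by (simp add: lead_coeff_prod)
  have "degree q = 0"
  proof (rule ccontr)
    assume "degree q \<noteq> 0"
    then obtain a where a: "poly q a = 0" using alg_closed_imp_poly_has_root[of q] by auto
    then have "a \<in> Z" using q by (simp add: Z_def)
    then have "[:-a, 1:] dvd P" unfolding P_def using finZ by (intro dvd_prodI)
    moreover have "[:-a, 1:] dvd q" using a by (simp add: poly_eq_0_iff_dvd)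
    ultimately have "[:-a, 1:] * [:-a, 1:] dvd f" unfolding q by (rule mult_dvd_mono)
    then have "[:-a, 1:] ^ 2 dvd f" by (simp add: power2_eq_square)
    then have "is_unit [:-a, 1:]" using assms(4) squarefreeD by blast
    then show False by (simp add: is_unit_iff_degree)
  qed
  then obtain c0 where c0: "q = [:c0:]" by (metis degree_eq_zeroE)
  have "lead_coeff f = lead_coeff P * c0" using q c0 by (simp add: lead_coeff_mult)
  then have "c0 = 1" using lP assms(1) by simp
  then have fP: "f = P" using q c0 by simp
  have ZAB: "Z = A \<union> B" "A \<inter> B = {}" unfolding A_def B_def by auto
  have "P = s * t" unfolding P_def s_def t_def using finZ ZAB
    by (metis finite_Un prod.union_disjoint)
  have "t dvd g" unfolding t_def using finZ by (intro prod_roots_dvd) (auto simp: B_def)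
  then obtain k where k: "g = t * k" by (auto elim: dvdE)
  have fdvd: "f dvd g * s" using fP \<open>P = s * t\<close> k by (simp add: mult_ac)
  have ls: "lead_coeff s = 1" unfolding s_def by (simp add: lead_coeff_prod)
  then have s0: "s \<noteq> 0" by auto
  have ker_dvd: "s dvd h" if "h \<in> ker_M f g" for h
  proof -
    have "f dvd g * h" using that by (simp add: ker_M_def mult_map_def mod_eq_0_iff_dvd)
    then obtain m where m: "g * h = f * m" by (auto elim: dvdE)
    show ?thesis unfolding s_def
    proof (rule prod_roots_dvd)
      show "finite A" using finZ by (simp add: A_def)
    next
      fix z assume "z \<in> A"
      then have "poly f z = 0" "poly g z \<noteq> 0" by (auto simp: A_def Z_def)
      then show "poly h z = 0" using arg_cong[OF m, of "\<lambda>p. poly p z"] by simp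
    qed
  qed
  have spanK: "col_span K = ker_M f g" using assms(6) by (simp add: is_basis_cols_def)
  have spanE: "col_span E = ker_M f g"
    using ops_span[of K E] assms(7) spanK by (simp add: col_echelon_form_of_def)
  obtain h where h: "h \<in> ker_M f g" "h \<noteq> 0" using assms(5) cs_0[of K] spanK by blast
  have "degree s \<le> degree h" using ker_dvd[OF h(1)] h(2) by (rule dvd_imp_degree_le)
  also have "degree h < degree f" using h(1) by (simp add: ker_M_def vecs_def)
  finally have sker: "s \<in> ker_M f g" using fdvd
    by (simp add: ker_M_def vecs_def mult_map_def mod_eq_0_iff_dvd)
  have En: "E \<noteq> []" using spanE assms(5) col_span_Nil by auto
  have hdE: "hd E \<in> ker_M f g" using En cs_set[of E] spanE by (metis hd_in_set subsetD)
  have hd0: "hd E \<noteq> 0" using En assms(7) by (simp add: col_echelon_form_of_def)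
  have sorted: "sorted_wrt (<) (map degree E)" using assms(7) by (simp add: col_echelon_form_of_def)
  obtain r where r: "hd E = s * r" using ker_dvd[OF hdE] by (auto elim: dvdE)
  have r0: "r \<noteq> 0" using r hd0 by auto
  obtain c where c: "s = (\<Sum>i<length E. smult (c i) (E!i))" using sker spanE col_span_alt[of E] by auto
  have "degree (hd E) \<le> degree s" using deg_comb[OF sorted En, of c] c s0 by simp
  then have "degree r = 0" using r r0 s0 by (simp add: degree_mult_eq)
  then obtain c1 where c1: "r = [:c1:]" by (metis degree_eq_zeroE)
  then have "c1 \<noteq> 0" using r0 by auto
  moreover have "hd E = smult c1 s" using r c1 by simp
  ultimately show ?thesis unfolding s_def A_def Z_def by blast
qed

end
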